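(* Let $f:\mathcal{X}\to\Delta^{k-1}$ be a classifier outputting confidence vectors, and let $x^{(1)},\dots,x^{(n)}\in\mathcal{X}$ be (unlabeled) samples. Let $f_\# P(c)=\frac1n\sum_{i=1}^n\delta_{f(x^{(i)})}$ be the empirical distribution of confidence vectors, and let $P_{\mathrm{pseudo}}(y)=\frac1n\sum_{i=1}^n\delta_{y^{(i)}}$, where $y^{(i)}\in\{0,1\}^k\cap\Delta^{k-1}$ is the one-hot pseudo-label with $y^{(i)}_j=\mathbb{1}[j=\arg\max_{j'} f_{j'}(x^{(i)})]$. Define the average-confidence error estimate $\hat\epsilon_{\mathrm{AC}}=\frac1n\sum_{i=1}^n\bigl(1-\max_j f_j(x^{(i)})\bigr)$. Then $$\hat\epsilon_{\mathrm{AC}}=W_\infty\bigl(f_\# P(c),\,P_{\mathrm{pseudo}}(y)\bigr).$$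
   Context: $\Delta^{k-1}=\{c\in\mathbb{R}^k: c_j\ge 0,\ \sum_j c_j=1\}$ is the probability simplex. For probability distributions $P,Q$ on $\mathbb{R}^k$, $W_\infty(P,Q)=\inf_{\pi\in\Pi(P,Q)}\int\|u-v\|_\infty\,d\pi(u,v)$, where $\Pi(P,Q)$ is the set of couplings of $P$ and $Q$; i.e. $W_\infty$ denotes the Wasserstein (optimal transport) distance with ground cost $c(u,v)=\|u-v\|_\infty$ (not the usual $\infty$-Wasserstein distance). Ties in $\arg\max$ are broken by a fixed rule (e.g. smallest index). *)

theory Defs
  imports "HOL-Analysis.Analysis" "HOL-Probability.Probability"
begin

definition prob_simplex :: "(real ^ 'k::finite) set" where
  "prob_simplex = {c. (\<forall>j. 0 \<le> c $ j) \<and> (\<Sum>j\<in>UNIV. c $ j) = 1}"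

definition linf_dist :: "real ^ 'k::finite \<Rightarrow> real ^ 'k \<Rightarrow> real" where
  "linf_dist u v = (MAX j\<in>UNIV. \<bar>u $ j - v $ j\<bar>)"

definition argmax_idx :: "real ^ 'k::{finite,wellorder} \<Rightarrow> 'k" where
  "argmax_idx c = (LEAST j. \<forall>j'. c $ j' \<le> c $ j)"

definition one_hot :: "'k::finite \<Rightarrow> real ^ 'k" where
  "one_hot j = (\<chi> i. if i = j then 1 else 0)"

definition W_inf :: "(real ^ 'k::finite) pmf \<Rightarrow> (real ^ 'k) pmf \<Rightarrow> real" where
  "W_inf P Q = Inf {measure_pmf.expectation \<pi> (\<lambda>(u, v). linf_dist u v) | \<pi>.
                    map_pmf fst \<pi> = P \<and> map_pmf snd \<pi> = Q}"

definition empirical :: "nat \<Rightarrow> (nat \<Rightarrow> 'a) \<Rightarrow> 'a pmf" where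
  "empirical n g = map_pmf g (pmf_of_set {..<n})"

end

theory Submission
  imports Defs
begin

lemma argmax_is_max:
  fixes u :: "real ^ 'k::{finite,wellorder}"
  shows "\<forall>j'. u $ j' \<le> u $ argmax_idx u"
proof -
  have "(MAX j\<in>UNIV. u $ j) \<in> (\<lambda>j. u $ j) ` UNIV"
    by (rule Max_in) auto
  then obtain m where m: "u $ m = (MAX j\<in>UNIV. u $ j)" by (metis imageE)
  have "\<forall>j'. u $ j' \<le> u $ m" unfolding m by (auto intro: Max_ge)
  then show ?thesis unfolding argmax_idx_def by (rule LeastI)
qed

lemma max_eq_argmax:
  fixes u :: "real ^ 'k::{finite,wellorder}"
  shows "(MAX j\<in>UNIV. u $ j) = u $ argmax_idx u"
  using argmax_is_max[of u]
  by (intro antisym) (auto intro: Max_ge)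


lemma simplex_le:
  fixes u :: "real ^ 'k::finite"
  assumes "u \<in> prob_simplex" "i \<noteq> j"
  shows "u $ i + u $ j \<le> 1"
proof -
  have "(\<Sum>l\<in>{i,j}. u $ l) \<le> (\<Sum>l\<in>UNIV. u $ l)"
    using assms by (intro sum_mono2) (auto simp: prob_simplex_def)
  then show ?thesis using assms by (simp add: prob_simplex_def)
qed

lemma simplex_le1:
  fixes u :: "real ^ 'k::finite"
  assumes "u \<in> prob_simplex"
  shows "u $ i \<le> 1"
proof -
  have "(\<Sum>l\<in>{i}. u $ l) \<le> (\<Sum>l\<in>UNIV. u $ l)"
    using assms by (intro sum_mono2) (auto simp: prob_simplex_def)
  then show ?thesis using assms by (simp add: prob_simplex_def)
qed

lemma dist_lower:
  fixes u :: "real ^ 'k::{finite,wellorder}"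
  assumes "u \<in> prob_simplex"
  shows "1 - (MAX j\<in>UNIV. u $ j) \<le> linf_dist u (one_hot j)"
proof -
  have "1 - (MAX j\<in>UNIV. u $ j) \<le> 1 - u $ j" by (simp add: Max_ge)
  also have "\<dots> = \<bar>u $ j - one_hot j $ j\<bar>"
    using simplex_le1[OF assms, of j] by (simp add: one_hot_def)
  also have "\<dots> \<le> linf_dist u (one_hot j)" unfolding linf_dist_def by (simp add: Max_ge)
  finally show ?thesis .
qed

lemma dist_eq:
  fixes u :: "real ^ 'k::{finite,wellorder}"
  assumes "u \<in> prob_simplex"
  shows "linf_dist u (one_hot (argmax_idx u)) = 1 - (MAX j\<in>UNIV. u $ j)"
proof (rule antisym)
  show "linf_dist u (one_hot (argmax_idx u)) \<le> 1 - (MAX j\<in>UNIV. u $ j)"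
    unfolding linf_dist_def max_eq_argmax
  proof (rule Max.boundedI)
    fix y assume "y \<in> (\<lambda>j. \<bar>u $ j - one_hot (argmax_idx u) $ j\<bar>) ` UNIV"
    then obtain i where y: "y = \<bar>u $ i - one_hot (argmax_idx u) $ i\<bar>" by auto
    show "y \<le> 1 - u $ argmax_idx u"
    proof (cases "i = argmax_idx u")
      case True then show ?thesis using y simplex_le1[OF assms, of i] by (simp add: one_hot_def)
    next
      case False then show ?thesis using y simplex_le[OF assms False] assms
        by (auto simp: one_hot_def prob_simplex_def)
    qed
  qed auto
qed (rule dist_lower[OF assms])

theorem mainTheorem1:
  fixes f :: "'x \<Rightarrow> real ^ 'k::{finite,wellorder}"
    and xs :: "nat \<Rightarrow> 'x"
    and n :: nat
  assumes "\<forall>x. f x \<in> prob_simplex"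
    and "n \<ge> 1"
  shows "(1 / real n) * (\<Sum>i<n. 1 - (MAX j\<in>UNIV. f (xs i) $ j))
         = W_inf (empirical n (\<lambda>i. f (xs i)))
                 (empirical n (\<lambda>i. one_hot (argmax_idx (f (xs i)))))"
proof -
  define g where "g i = f (xs i)" for i
  define h where "h i = one_hot (argmax_idx (g i))" for i
  define \<phi> :: "real ^ 'k::{finite,wellorder} \<Rightarrow> real" where "\<phi> u = 1 - (MAX j\<in>UNIV. u $ j)" for u
  define S where "S = pmf_of_set {..<n}"
  have ne: "{..<n} \<noteq> {}" using assms(2) by (metis lessThan_empty_iff not_one_le_zero)
  have setS: "set_pmf S = {..<n}" unfolding S_def using ne by simp
  have avg: "measure_pmf.expectation S (\<lambda>i. \<phi> (g i)) = (1 / real n) * (\<Sum>i<n. \<phi> (g i))"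
    unfolding S_def using ne by (simp add: integral_pmf_of_set)
  define \<pi>0 where "\<pi>0 = map_pmf (\<lambda>i. (g i, h i)) S"
  have m0: "map_pmf fst \<pi>0 = empirical n g" "map_pmf snd \<pi>0 = empirical n h"
    unfolding \<pi>0_def empirical_def S_def by (simp_all add: pmf.map_comp o_def)
  have e0: "measure_pmf.expectation \<pi>0 (\<lambda>(u, v). linf_dist u v) = (1 / real n) * (\<Sum>i<n. \<phi> (g i))"
  proof -
    have "measure_pmf.expectation \<pi>0 (\<lambda>(u, v). linf_dist u v) = measure_pmf.expectation S (\<lambda>i. \<phi> (g i))"
    proof -
      have "(\<lambda>i. linf_dist (g i) (h i)) = (\<lambda>i. \<phi> (g i))"
        using dist_eq assms(1) by (auto simp: h_def g_def \<phi>_def)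
      then show ?thesis unfolding \<pi>0_def by simp
    qed
    then show ?thesis using avg by simp
  qed
  have lower: "(1 / real n) * (\<Sum>i<n. \<phi> (g i)) \<le> measure_pmf.expectation \<pi> (\<lambda>(u, v). linf_dist u v)"
    if "map_pmf fst \<pi> = empirical n g" "map_pmf snd \<pi> = empirical n h" for \<pi>
  proof -
    have sub: "set_pmf \<pi> \<subseteq> g ` {..<n} \<times> h ` {..<n}"
    proof
      fix p assume p: "p \<in> set_pmf \<pi>"
      have "fst p \<in> set_pmf (map_pmf fst \<pi>)" "snd p \<in> set_pmf (map_pmf snd \<pi>)" using p by auto
      then show "p \<in> g ` {..<n} \<times> h ` {..<n}"
        using that ne unfolding empirical_def by (cases p) auto
    qed
    have fin: "finite (set_pmf \<pi>)" by (rule finite_subset[OF sub]) auto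
    have "(1 / real n) * (\<Sum>i<n. \<phi> (g i)) = measure_pmf.expectation (map_pmf fst \<pi>) \<phi>"
      using that(1) avg by (simp add: empirical_def S_def)
    also have "\<dots> = measure_pmf.expectation \<pi> (\<lambda>p. \<phi> (fst p))" by simp
    also have "\<dots> \<le> measure_pmf.expectation \<pi> (\<lambda>(u, v). linf_dist u v)"
    proof (rule integral_mono_AE)
      show "integrable (measure_pmf \<pi>) (\<lambda>p. \<phi> (fst p))"
        using fin by (rule integrable_measure_pmf_finite)
      show "integrable (measure_pmf \<pi>) (\<lambda>(u, v). linf_dist u v)"
        using fin by (rule integrable_measure_pmf_finite)
      show "AE p in measure_pmf \<pi>. \<phi> (fst p) \<le> (case p of (u, v) \<Rightarrow> linf_dist u v)"
      proof (rule AE_pmfI)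
        fix p assume "p \<in> set_pmf \<pi>"
        then obtain i l where "fst p = g i" "snd p = h l" using sub by auto
        then show "\<phi> (fst p) \<le> (case p of (u, v) \<Rightarrow> linf_dist u v)"
          using dist_lower[of "g i"] assms(1) unfolding \<phi>_def h_def g_def
          by (cases p) auto
      qed
    qed
    finally show ?thesis .
  qed
  have "W_inf (empirical n g) (empirical n h) = (1 / real n) * (\<Sum>i<n. \<phi> (g i))"
    unfolding W_inf_def
  proof (rule cInf_eq_minimum)
    show "(1 / real n) * (\<Sum>i<n. \<phi> (g i)) \<in> {measure_pmf.expectation \<pi> (\<lambda>(u, v). linf_dist u v) |\<pi>.
          map_pmf fst \<pi> = empirical n g \<and> map_pmf snd \<pi> = empirical n h}"
      using m0 e0 by (metis (mono_tags, lifting) mem_Collect_eq)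
  next
    fix x assume "x \<in> {measure_pmf.expectation \<pi> (\<lambda>(u, v). linf_dist u v) |\<pi>.
          map_pmf fst \<pi> = empirical n g \<and> map_pmf snd \<pi> = empirical n h}"
    then show "(1 / real n) * (\<Sum>i<n. \<phi> (g i)) \<le> x" using lower by blast
  qed
  then show ?thesis unfolding g_def h_def \<phi>_def by simp
qed

end
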